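(* Every ordered graph $F$ on $k$ vertices that does not contain a monotone path of length two is an ordered subgraph of $H_k$.
   Context: An ordered graph is a graph with a totally ordered vertex set. A monotone path of length two in $F$ consists of vertices $u<v<w$ with $uv,vw\in E(F)$. $H_k$ is the ordered graph with vertex set $[k]\times\{0,1\}$, ordered lexicographically ($(a,i)<(b,j)$ iff $a<b$, or $a=b$ and $i<j$), and edge set $\{(x,0)(y,1): x\le y\}$. $F$ is an ordered subgraph of $H$ if there is an injective order-preserving map $V(F)\to V(H)$ sending edges of $F$ to edges of $H$. *)

theory Defs
  imports Main
begin

definition ordered_graph :: "'a::linorder set \<Rightarrow> ('a \<Rightarrow> 'a \<Rightarrow> bool) \<Rightarrow> bool" where
  "ordered_graph V E \<longleftrightarrow> finite V \<and> (\<forall>u v. E u v \<longrightarrow> u \<in> V \<and> v \<in> V)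
     \<and> (\<forall>u v. E u v \<longrightarrow> E v u) \<and> (\<forall>u. \<not> E u u)"

definition has_monotone_2path :: "'a::linorder set \<Rightarrow> ('a \<Rightarrow> 'a \<Rightarrow> bool) \<Rightarrow> bool" where
  "has_monotone_2path V E \<longleftrightarrow>
     (\<exists>u\<in>V. \<exists>v\<in>V. \<exists>w\<in>V. u < v \<and> v < w \<and> E u v \<and> E v w)"

definition H_vert :: "nat \<Rightarrow> (nat \<times> nat) set" where
  "H_vert k = {1..k} \<times> {0, 1}"

definition H_less :: "nat \<times> nat \<Rightarrow> nat \<times> nat \<Rightarrow> bool" where
  "H_less p q \<longleftrightarrow> fst p < fst q \<or> (fst p = fst q \<and> snd p < snd q)"

definition H_edge :: "nat \<Rightarrow> nat \<times> nat \<Rightarrow> nat \<times> nat \<Rightarrow> bool" where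
  "H_edge k p q \<longleftrightarrow> p \<in> H_vert k \<and> q \<in> H_vert k \<and>
     ((snd p = 0 \<and> snd q = 1 \<and> fst p \<le> fst q) \<or> (snd q = 0 \<and> snd p = 1 \<and> fst q \<le> fst p))"

definition ordered_subgraph_H :: "'a::linorder set \<Rightarrow> ('a \<Rightarrow> 'a \<Rightarrow> bool) \<Rightarrow> nat \<Rightarrow> bool" where
  "ordered_subgraph_H V E k \<longleftrightarrow> (\<exists>f. inj_on f V \<and> f ` V \<subseteq> H_vert k
     \<and> (\<forall>u\<in>V. \<forall>v\<in>V. u < v \<longrightarrow> H_less (f u) (f v))
     \<and> (\<forall>u\<in>V. \<forall>v\<in>V. E u v \<longrightarrow> H_edge k (f u) (f v)))"

end

theory Submission imports Defs begin
lemma rank_mono: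
  fixes V :: "'a::linorder set"
  assumes "finite V" "u \<in> V" "v \<in> V" "u < v"
  shows "card {x\<in>V. x \<le> u} < card {x\<in>V. x \<le> v}"
proof (rule psubset_card_mono)
  show "finite {x\<in>V. x \<le> v}" using assms by simp
  have "v \<in> {x\<in>V. x \<le> v}" "v \<notin> {x\<in>V. x \<le> u}" using assms by auto
  then show "{x\<in>V. x \<le> u} \<subset> {x\<in>V. x \<le> v}" using assms by auto
qed

lemma rank_range:
  fixes V :: "'a::linorder set"
  assumes "finite V" "v \<in> V"
  shows "card {x\<in>V. x \<le> v} \<in> {1..card V}"
proof -
  have "v \<in> {x\<in>V. x \<le> v}" using assms by simp
  moreover have "finite {x\<in>V. x \<le> v}" using assms by simp
  ultimately have "card {x\<in>V. x \<le> v} \<noteq> 0" by auto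
  moreover have "card {x\<in>V. x \<le> v} \<le> card V" using assms by (intro card_mono) auto
  ultimately show ?thesis by simp
qed
theorem lemma4p1:
  fixes V :: "'a::linorder set" and E :: "'a \<Rightarrow> 'a \<Rightarrow> bool" and k :: nat
  assumes "ordered_graph V E"
    and "card V = k"
    and "\<not> has_monotone_2path V E"
  shows "ordered_subgraph_H V E k"
proof -
  have fin: "finite V" and sup: "\<And>u v. E u v \<Longrightarrow> u \<in> V \<and> v \<in> V"
    and sym: "\<And>u v. E u v \<Longrightarrow> E v u" and irr: "\<And>u. \<not> E u u"
    using assms(1) unfolding ordered_graph_def by auto
  have np: "\<And>u v w. u < v \<Longrightarrow> v < w \<Longrightarrow> E u v \<Longrightarrow> E v w \<Longrightarrow> False"
    using assms(3) sup unfolding has_monotone_2path_def by blast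
  define r where "r v = card {x\<in>V. x \<le> v}" for v
  define f where "f v = (r v, if \<exists>u\<in>V. u < v \<and> E u v then 1 else 0::nat)" for v
  have less: "H_less (f u) (f v)" if "u \<in> V" "v \<in> V" "u < v" for u v
    using rank_mono[OF fin that] unfolding H_less_def f_def r_def by simp
  have vert: "f v \<in> H_vert k" if "v \<in> V" for v
    using rank_range[OF fin that] assms(2) unfolding f_def r_def H_vert_def by auto
  have rle: "r u \<le> r v" if "u \<in> V" "v \<in> V" "u < v" for u v
    using rank_mono[OF fin that] unfolding r_def by simp
  have edge1: "H_edge k (f u) (f v)" if "u \<in> V" "v \<in> V" "u < v" "E u v" for u v
  proof -
    have "snd (f u) = 0" using np that unfolding f_def by auto
    moreover have "snd (f v) = 1" using that unfolding f_def by auto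
    moreover have "f u \<in> H_vert k" "f v \<in> H_vert k" using vert that by auto
    moreover have "fst (f u) \<le> fst (f v)" using rle[OF that(1-3)] unfolding f_def by simp
    ultimately show ?thesis unfolding H_edge_def by simp
  qed
  show ?thesis unfolding ordered_subgraph_H_def
  proof (intro exI conjI ballI impI)
    show "inj_on f V"
    proof (rule inj_onI)
      fix x y assume "x \<in> V" "y \<in> V" "f x = f y"
      then show "x = y" using less[of x y] less[of y x] unfolding H_less_def
        by (metis less_irrefl linorder_neqE)
    qed
    show "f ` V \<subseteq> H_vert k" using vert by auto
  next
    fix u v assume "u \<in> V" "v \<in> V" "u < v" then show "H_less (f u) (f v)" by (rule less)
  next
    fix u v assume uv: "u \<in> V" "v \<in> V" "E u v"
    have "u \<noteq> v" using irr uv by auto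
    then consider "u < v" | "v < u" by fastforce
    then show "H_edge k (f u) (f v)"
    proof cases
      case 1 then show ?thesis using edge1 uv by auto
    next
      case 2 then have "H_edge k (f v) (f u)" using edge1 uv sym by auto
      then show ?thesis unfolding H_edge_def by auto
    qed
  qed
qed

end
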